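(* For every $n\in\mathbb{N}$ and every real $t$ with $|t|<1$, \[ \frac{(\operatorname{arctanh} t)^n}{n!}=\sum_{k=0}^{\infty}\left(\sum_{\ell_{n-1}=0}^{k}\frac{1}{2\ell_{n-1}+n-1}\sum_{\ell_{n-2}=0}^{\ell_{n-1}}\frac{1}{2\ell_{n-2}+n-2}\cdots\sum_{\ell_2=0}^{\ell_3}\frac{1}{2\ell_2+2}\sum_{\ell_1=0}^{\ell_2}\frac{1}{2\ell_1+1}\right)\frac{t^{2k+n}}{2k+n}, \] i.e. the coefficient in parentheses is $\prod_{m=1}^{n-1}\sum_{\ell_m=0}^{\ell_{m+1}}\frac{1}{2\ell_m+m}$ (nested sums, with $\ell_n=k$), which is understood to be $1$ when $n=1$. *)

theory Defs
  imports Complex_Main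
begin

text \<open>nested_coeff m k is the nested sum with n = m + 1 and innermost-outer index l_n = k:
  nested_coeff 0 k = 1 (case n = 1), and
  nested_coeff (Suc m) k = sum over l = 0..k of 1/(2 l + m + 1) * nested_coeff m l.\<close>
fun nested_coeff :: "nat \<Rightarrow> nat \<Rightarrow> real" where
  "nested_coeff 0 k = 1"
| "nested_coeff (Suc m) k = (\<Sum>l=0..k. (1 / (2 * real l + real (Suc m))) * nested_coeff m l)"

end

theory Submission
  imports Defs "HOL-Analysis.FPS_Convergence"
begin

definition Acoef :: "nat \<Rightarrow> real" where
  "Acoef j = (if odd j then 1 / real j else 0)"

definition Afps :: "real fps" where "Afps = Abs_fps Acoef"

definition Bc :: "nat \<Rightarrow> nat \<Rightarrow> real" where
  "Bc n j = (if n \<le> j \<and> even (j - n) then nested_coeff (n - 1) ((j - n) div 2) / real j else 0)"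

definition Dfps :: "real fps" where "Dfps = Abs_fps (\<lambda>i. if even i then 1 else 0)"

lemma deriv_A: "fps_deriv Afps = Dfps"
  by (auto simp: fps_eq_iff Afps_def Dfps_def Acoef_def)

lemma coeff_lemma:
  "fps_nth (Abs_fps (Bc (Suc m)) * Dfps) j = real (j + 1) * Bc (Suc (Suc m)) (j + 1)"
proof -
  define g where "g i = Bc (Suc m) i * (if even (j - i) then 1 else 0)" for i
  have lhs: "fps_nth (Abs_fps (Bc (Suc m)) * Dfps) j = (\<Sum>i=0..j. g i)"
    by (simp add: fps_mult_nth Dfps_def g_def)
  show ?thesis
  proof (cases "Suc m \<le> j \<and> even (j - Suc m)")
    case True
    then obtain k where jk: "j = Suc m + 2 * k"
      by (metis dvd_def le_add_diff_inverse)
    have inj: "inj_on (\<lambda>l. Suc m + 2 * l) {0..k}" by (auto simp: inj_on_def)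
    have "(\<Sum>i=0..j. g i) = (\<Sum>i\<in>(\<lambda>l. Suc m + 2 * l) ` {0..k}. g i)"
    proof (rule sum.mono_neutral_right)
      show "(\<lambda>l. Suc m + 2 * l) ` {0..k} \<subseteq> {0..j}" using jk by auto
      show "\<forall>i\<in>{0..j} - (\<lambda>l. Suc m + 2 * l) ` {0..k}. g i = 0"
      proof
        fix i assume i: "i \<in> {0..j} - (\<lambda>l. Suc m + 2 * l) ` {0..k}"
        show "g i = 0"
        proof (rule ccontr)
          assume "g i \<noteq> 0"
          hence "Suc m \<le> i" "even (i - Suc m)" by (auto simp: g_def Bc_def split: if_splits)
          then obtain l where "i = Suc m + 2 * l" by (metis dvd_def le_add_diff_inverse)
          moreover have "l \<le> k" using i jk \<open>i = Suc m + 2 * l\<close> by auto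
          ultimately show False using i by auto
        qed
      qed
    qed simp
    also have "\<dots> = (\<Sum>l=0..k. g (Suc m + 2 * l))"
      by (subst sum.reindex[OF inj]) simp
    also have "\<dots> = (\<Sum>l=0..k. 1 / (2 * real l + real (Suc m)) * nested_coeff m l)"
    proof (rule sum.cong)
      fix l assume l: "l \<in> {0..k}"
      have "j - (Suc m + 2 * l) = 2 * (k - l)" using jk l by auto
      hence "even (j - (Suc m + 2 * l))" by simp
      thus "g (Suc m + 2 * l) = 1 / (2 * real l + real (Suc m)) * nested_coeff m l"
        by (simp add: g_def Bc_def algebra_simps)
    qed simp
    also have "\<dots> = real (j + 1) * Bc (Suc (Suc m)) (j + 1)"
      using jk by (simp add: Bc_def)
    finally show ?thesis using lhs by simp
  next
    case False
    have "\<And>i. i \<in> {0..j} \<Longrightarrow> g i = 0"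
    proof -
      fix i assume i: "i \<in> {0..j}"
      show "g i = 0"
      proof (rule ccontr)
        assume "g i \<noteq> 0"
        hence h: "Suc m \<le> i" "even (i - Suc m)" "even (j - i)"
          by (auto simp: g_def Bc_def split: if_splits)
        obtain a where a: "i - Suc m = 2 * a" using h(2) by (rule evenE)
        obtain b where b: "j - i = 2 * b" using h(3) by (rule evenE)
        note ab = a b
        have "j - Suc m = 2 * (a + b)" "Suc m \<le> j" using ab i \<open>Suc m \<le> i\<close> by auto
        hence "Suc m \<le> j \<and> even (j - Suc m)" by simp
        thus False using False by blast
      qed
    qed
    hence "(\<Sum>i=0..j. g i) = 0" by simp
    moreover have "Bc (Suc (Suc m)) (j + 1) = 0" using False by (auto simp: Bc_def)
    ultimately show ?thesis using lhs by simp
  qed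
qed

lemma key: "fps_const (1 / fact (Suc m)) * Afps ^ Suc m = Abs_fps (Bc (Suc m))"
proof (induction m)
  case 0
  show ?case by (auto simp: fps_eq_iff Afps_def Bc_def Acoef_def)
next
  case (Suc m)
  define F where "F = fps_const (1 / fact (Suc (Suc m))) * Afps ^ Suc (Suc m)"
  define G where "G = Abs_fps (Bc (Suc (Suc m)))"
  have c: "fps_const (1 / fact (Suc (Suc m))) * fps_const (of_nat (Suc (Suc m))) =
        (fps_const (1 / fact (Suc m)) :: real fps)"
  proof -
    have f: "fact (Suc (Suc m)) = real (Suc (Suc m)) * fact (Suc m)" by (rule fact_Suc)
    have "1 / fact (Suc (Suc m)) * real (Suc (Suc m)) = 1 / (fact (Suc m) :: real)"
      unfolding f by (simp del: of_nat_Suc fact_Suc)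
    thus ?thesis by (metis fps_const_mult)
  qed
  have "fps_deriv F = fps_const (1 / fact (Suc (Suc m))) * (fps_const (of_nat (Suc (Suc m))) * Dfps * Afps ^ Suc m)"
    by (simp add: F_def fps_deriv_power deriv_A del: of_nat_Suc fact_Suc power_Suc)
  also have "\<dots> = (fps_const (1 / fact (Suc (Suc m))) * fps_const (of_nat (Suc (Suc m)))) * Afps ^ Suc m * Dfps"
    by (simp only: mult_ac)
  also have "\<dots> = Abs_fps (Bc (Suc m)) * Dfps" by (simp only: c Suc.IH)
  also have "\<dots> = fps_deriv G"
    by (simp add: fps_eq_iff G_def coeff_lemma del: of_nat_Suc) 
  finally have "fps_deriv F = fps_deriv G" .
  hence "F = fps_const (fps_nth F 0 - fps_nth G 0) + G" by (simp add: fps_deriv_eq_iff)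
  moreover have "fps_nth F 0 = 0" by (simp add: F_def fps_nth_power_0 Afps_def Acoef_def)
  moreover have "fps_nth G 0 = 0" by (simp add: G_def Bc_def)
  ultimately show ?case by (simp add: F_def G_def)
qed

lemma artanh_sums:
  fixes t :: real assumes t: "\<bar>t\<bar> < 1"
  shows "(\<lambda>j. Acoef j * t ^ j) sums artanh t"
proof -
  define s1 where "s1 = (\<lambda>n. (-1)^n * (1 / real (n + 1)) * t ^ Suc n)"
  define s2 where "s2 = (\<lambda>n. (-1)^n * (1 / real (n + 1)) * (-t) ^ Suc n)"
  have sm: "summable (\<lambda>n. (-1)^n * (1 / real (n + 1)) * y ^ Suc n)" if "\<bar>y\<bar> < 1" for y :: real
  proof (rule summable_comparison_test')
    have "summable (\<lambda>n. \<bar>y\<bar> ^ n)" using that by (simp add: summable_geometric)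
    hence "summable (\<lambda>n. \<bar>y\<bar> * \<bar>y\<bar> ^ n)" by (rule summable_mult)
    thus "summable (\<lambda>n. \<bar>y\<bar> ^ Suc n)" by simp
    fix n :: nat
    have "norm ((-1)^n * (1 / real (n + 1)) * y ^ Suc n) = (1 / real (n + 1)) * \<bar>y\<bar> ^ Suc n"
      by (simp add: abs_mult power_abs del: power_Suc)
    also have "\<dots> \<le> 1 * \<bar>y\<bar> ^ Suc n"
      by (intro mult_right_mono) auto
    finally show "norm ((-1)^n * (1 / real (n + 1)) * y ^ Suc n) \<le> \<bar>y\<bar> ^ Suc n" by simp
  qed
  have S1: "s1 sums ln (1 + t)"
  proof -
    have "ln (1 + t) = suminf s1" using ln_series[of "1 + t"] t by (simp add: s1_def)
    thus ?thesis using sm[of t] t by (simp add: s1_def summable_sums)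
  qed
  have S2: "s2 sums ln (1 - t)"
  proof -
    have "ln (1 - t) = suminf s2" using ln_series[of "1 - t"] t by (simp add: s2_def)
    thus ?thesis using sm[of "-t"] t by (simp add: s2_def summable_sums)
  qed
  have "(\<lambda>n. (s1 n - s2 n) / 2) sums ((ln (1 + t) - ln (1 - t)) / 2)"
    by (intro sums_divide sums_diff S1 S2)
  moreover have "ln (1 + t) - ln (1 - t) = ln ((1 + t) / (1 - t))"
    using t by (subst ln_div) auto
  moreover have "(s1 n - s2 n) / 2 = Acoef (Suc n) * t ^ Suc n" for n
  proof (cases "even n")
    case True
    have "s1 n = 1 / real (n + 1) * t ^ Suc n" "s2 n = - (1 / real (n + 1) * t ^ Suc n)"
      using True by (simp_all add: s1_def s2_def)
    moreover have e: "\<And>a::real. (a - - a) / 2 = a" by simp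
    ultimately have "(s1 n - s2 n) / 2 = 1 / real (n + 1) * t ^ Suc n" by (simp only: e)
    moreover have "Acoef (Suc n) * t ^ Suc n = 1 / real (n + 1) * t ^ Suc n"
      using True by (simp add: Acoef_def)
    ultimately show ?thesis by (rule trans[OF _ sym])
  next
    case False
    have "s1 n = s2 n" using False by (simp add: s1_def s2_def)
    thus ?thesis using False by (simp add: Acoef_def)
  qed
  ultimately have "(\<lambda>n. Acoef (Suc n) * t ^ Suc n) sums artanh t"
    by (simp add: artanh_def)
  hence "(\<lambda>j. Acoef j * t ^ j) sums (artanh t + Acoef 0 * t ^ 0)"
    by (rule sums_Suc[where f = "\<lambda>j. Acoef j * t ^ j"])
  thus ?thesis by (simp add: Acoef_def)
qed

lemma radius_A:
  fixes t :: real assumes t: "\<bar>t\<bar> < 1"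
  shows "ereal (norm t) < fps_conv_radius Afps"
proof -
  define r where "r = (\<bar>t\<bar> + 1) / 2"
  have r: "\<bar>t\<bar> < r" "r < 1" "0 \<le> r" using t by (auto simp: r_def)
  have "summable (\<lambda>j. Acoef j * r ^ j)"
  proof (rule summable_comparison_test')
    show "summable (\<lambda>j. r ^ j)" using r by (simp add: summable_geometric)
    fix j :: nat
    have "\<bar>Acoef j\<bar> \<le> 1" by (cases j) (auto simp: Acoef_def)
    hence "\<bar>Acoef j\<bar> * r ^ j \<le> 1 * r ^ j" using r by (intro mult_right_mono) auto
    thus "norm (Acoef j * r ^ j) \<le> r ^ j" using r by (simp add: abs_mult)
  qed
  hence "ereal (norm r) \<le> conv_radius Acoef" by (rule conv_radius_geI)
  hence "norm r \<le> fps_conv_radius Afps"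
    unfolding fps_conv_radius_def Afps_def by simp
  moreover have "ereal \<bar>t\<bar> < ereal r" using r by simp
  ultimately show ?thesis using r(3) by (metis less_le_trans real_norm_def abs_of_nonneg)
qed

theorem mainTheorem10:
  fixes n :: nat and t :: real
  assumes "n \<ge> 1" and "\<bar>t\<bar> < 1"
  shows "(\<lambda>k. nested_coeff (n - 1) k * t ^ (2 * k + n) / real (2 * k + n))
           sums (artanh t ^ n / fact n)"
proof -
  obtain m where n: "n = Suc m" using assms(1) by (cases n) auto
  define E where "E = fps_const (1 / fact n) * Afps ^ n"
  have E: "E = Abs_fps (Bc n)" using key[of m] by (simp add: E_def n)
  have rA: "ereal (norm t) < fps_conv_radius Afps" by (rule radius_A[OF assms(2)])
  have rAn: "ereal (norm t) < fps_conv_radius (Afps ^ n)"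
    using rA fps_conv_radius_power[of Afps n] by (rule less_le_trans)
  have rE: "ereal (norm t) < fps_conv_radius E"
  proof -
    have "fps_conv_radius E = fps_conv_radius (Afps ^ n)"
      unfolding E_def by (rule fps_conv_radius_cmult_left) simp
    thus ?thesis using rAn by simp
  qed
  have evA: "eval_fps Afps t = artanh t"
    using artanh_sums[OF assms(2)] by (simp add: eval_fps_def Afps_def sums_iff)
  have "eval_fps E t = 1 / fact n * artanh t ^ n"
    unfolding E_def using rAn by (simp add: eval_fps_mult eval_fps_power[OF rA] evA)
  hence S: "(\<lambda>j. Bc n j * t ^ j) sums (artanh t ^ n / fact n)"
    using sums_eval_fps[OF rE] by (simp add: E)
  have sm: "strict_mono (\<lambda>k::nat. 2 * k + n)" by (auto simp: strict_mono_def)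
  have z: "Bc n j * t ^ j = 0" if "j \<notin> range (\<lambda>k::nat. 2 * k + n)" for j
  proof (rule ccontr)
    assume "Bc n j * t ^ j \<noteq> 0"
    hence "n \<le> j" "even (j - n)" by (auto simp: Bc_def split: if_splits)
    then obtain k where "j - n = 2 * k" by (metis evenE)
    hence "j = 2 * k + n" using \<open>n \<le> j\<close> by simp
    thus False using that by auto
  qed
  have "(\<lambda>k. Bc n (2 * k + n) * t ^ (2 * k + n)) sums (artanh t ^ n / fact n)"
    using sums_mono_reindex[OF sm, of "\<lambda>j. Bc n j * t ^ j", OF z] S by simp
  moreover have "Bc n (2 * k + n) * t ^ (2 * k + n) =
      nested_coeff (n - 1) k * t ^ (2 * k + n) / real (2 * k + n)" for k
    by (simp add: Bc_def)
  ultimately show ?thesis by simp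
qed

end
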